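(* For the complete binary tree with uniform prior $\pi$ on $\mathcal{P}_m$ and Gaussian mean shift $\mu_m$, the likelihood ratio $L_m=2^{-(m-1)}\sum_{p\in\mathcal{P}_m}e^{\mu_mX_p-m\mu_m^2/2}$ (with $X_p=\sum_{v\in p}X_v$) satisfies, with $\tau_m=e^{\mu_m^2}/2$ and $\tau_m\neq1$, $\mathrm{Var}_0(L_m)=\frac{(2\tau_m-1)(1-\tau_m^m)}{1-\tau_m}$; in particular $\mathrm{Var}_0(L_m)\to0$ whenever $\mu_m\to0$.
   Context: Binary tree: $V_m=\{(i,j):0\le i\le m-1,\ 0\le j<2^i\}$ with oriented edges $(i,j)\to(i+1,2j+s)$, $s\in\{0,1\}$; $\mathcal{P}_m$ is the set of $2^{m-1}$ directed paths from the root visiting $m$ vertices. $\mathrm{Var}_0$ is the variance under $H_0$, where the $X_v$ are i.i.d. $N(0,1)$. *)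

theory Defs
  imports "HOL-Probability.Probability"
begin

text \<open>Vertices of the infinite complete binary tree: level i, position j < 2^i.\<close>
definition tree_V_all :: "(nat \<times> nat) set" where
  "tree_V_all = {(i, j). j < 2 ^ i}"

definition tree_V :: "nat \<Rightarrow> (nat \<times> nat) set" where
  "tree_V m = {(i, j). i \<le> m - 1 \<and> j < 2 ^ i \<and> 0 < m}"

text \<open>P_m: directed paths from the root visiting m vertices, as vertex lists.\<close>
definition tree_paths :: "nat \<Rightarrow> (nat \<times> nat) list set" where
  "tree_paths m = {p. length p = m \<and> p \<noteq> [] \<and> hd p = (0, 0) \<and>
     (\<forall>k. k + 1 < m \<longrightarrow>
        (\<exists>s\<in>{0, 1}. p ! (k + 1) = (fst (p ! k) + 1, 2 * snd (p ! k) + s)))}"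

definition path_sum :: "(nat \<times> nat \<Rightarrow> 'a \<Rightarrow> real) \<Rightarrow> (nat \<times> nat) list \<Rightarrow> 'a \<Rightarrow> real" where
  "path_sum X p \<omega> = (\<Sum>v\<in>set p. X v \<omega>)"

definition LR :: "real \<Rightarrow> nat \<Rightarrow> (nat \<times> nat \<Rightarrow> 'a \<Rightarrow> real) \<Rightarrow> 'a \<Rightarrow> real" where
  "LR \<mu> m X \<omega> = (1 / 2 ^ (m - 1)) *
     (\<Sum>p\<in>tree_paths m. exp (\<mu> * path_sum X p \<omega> - real m * \<mu>\<^sup>2 / 2))"

end

theory Submission
  imports Defs
begin

lemma std_normal_exp_eq: "std_normal_density x * exp (t*x) = exp (t^2/2) * normal_density t 1 x"
proof -
  have "exp (- x\<^sup>2 / 2) * exp (t*x) = exp (t^2/2) * exp (-(x - t)\<^sup>2/ 2)"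
    by (simp add: mult_exp_exp power2_eq_square field_simps)
  then show ?thesis unfolding std_normal_density_def normal_density_def by simp
qed

lemma std_normal_mgf_integrable: "integrable lborel (\<lambda>x. std_normal_density x * exp (t*x))"
  unfolding std_normal_exp_eq by simp

lemma std_normal_mgf: "(\<integral>x. std_normal_density x * exp (t*x) \<partial>lborel) = exp (t^2/2)"
  unfolding std_normal_exp_eq by simp

lemma (in prob_space) mgf_distr:
  assumes "distributed M lborel Y std_normal_density"
  shows "integrable M (\<lambda>\<omega>. exp (t * Y \<omega>))" "expectation (\<lambda>\<omega>. exp (t * Y \<omega>)) = exp (t^2/2)"
proof -
  have m: "(\<lambda>x. exp (t*x)) \<in> borel_measurable lborel" by measurable
  show "integrable M (\<lambda>\<omega>. exp (t * Y \<omega>))"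
    using distributed_integrable[OF assms m] std_normal_mgf_integrable by simp
  show "expectation (\<lambda>\<omega>. exp (t * Y \<omega>)) = exp (t^2/2)"
    using distributed_integral[OF assms m] std_normal_mgf by simp
qed

lemma (in prob_space) mgf_sum:
  assumes ind: "indep_vars (\<lambda>_. borel) X I"
    and d: "\<forall>v\<in>I. distributed M lborel (X v) std_normal_density"
    and S: "finite S" "S \<subseteq> I"
  shows "integrable M (\<lambda>\<omega>. exp (\<Sum>v\<in>S. c v * X v \<omega>))"
    "expectation (\<lambda>\<omega>. exp (\<Sum>v\<in>S. c v * X v \<omega>)) = exp (\<Sum>v\<in>S. (c v)^2 / 2)"
proof -
  have ind2: "indep_vars (\<lambda>_. borel) (\<lambda>v \<omega>. exp (c v * X v \<omega>)) S"
    using indep_vars_compose2[OF indep_vars_subset[OF ind S(2)], of "\<lambda>v x. exp (c v * x)" "\<lambda>_. borel"]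
    by simp
  have int: "\<And>v. v \<in> S \<Longrightarrow> integrable M (\<lambda>\<omega>. exp (c v * X v \<omega>))"
    using mgf_distr d S(2) by blast
  have eq: "(\<lambda>\<omega>. exp (\<Sum>v\<in>S. c v * X v \<omega>)) = (\<lambda>\<omega>. \<Prod>v\<in>S. exp (c v * X v \<omega>))"
    by (simp add: exp_sum[OF S(1)])
  show "integrable M (\<lambda>\<omega>. exp (\<Sum>v\<in>S. c v * X v \<omega>))"
    unfolding eq by (rule indep_vars_integrable[OF S(1) ind2 int])
  have "expectation (\<lambda>\<omega>. exp (\<Sum>v\<in>S. c v * X v \<omega>)) = (\<Prod>v\<in>S. expectation (\<lambda>\<omega>. exp (c v * X v \<omega>)))"
    unfolding eq by (rule indep_vars_lebesgue_integral[OF S(1) ind2 int])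
  also have "\<dots> = (\<Prod>v\<in>S. exp ((c v)^2/2))"
    using mgf_distr d S(2) by (intro prod.cong) auto
  also have "\<dots> = exp (\<Sum>v\<in>S. (c v)^2 / 2)" by (simp add: exp_sum[OF S(1)])
  finally show "expectation (\<lambda>\<omega>. exp (\<Sum>v\<in>S. c v * X v \<omega>)) = exp (\<Sum>v\<in>S. (c v)^2 / 2)" .
qed


lemma tp_step: "p \<in> tree_paths m \<Longrightarrow> k + 1 < m \<Longrightarrow>
   \<exists>s\<in>{0, 1}. p ! (k + 1) = (fst (p ! k) + 1, 2 * snd (p ! k) + s)"
  unfolding tree_paths_def by blast

lemma tp_hd: "p \<in> tree_paths m \<Longrightarrow> p ! 0 = (0,0)"
  unfolding tree_paths_def by (metis (mono_tags, lifting) hd_conv_nth mem_Collect_eq)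

lemma tp_fst: "p \<in> tree_paths m \<Longrightarrow> k < m \<Longrightarrow> fst (p ! k) = k"
proof (induction k)
  case 0
  then show ?case using tp_hd by simp
next
  case (Suc k)
  then obtain s where "p ! (k + 1) = (fst (p ! k) + 1, 2 * snd (p ! k) + s)"
    using tp_step[of p m k] by auto
  then show ?case using Suc by simp
qed

lemma tp_len: "p \<in> tree_paths m \<Longrightarrow> length p = m"
  by (simp add: tree_paths_def)

lemma tp_distinct: assumes "p \<in> tree_paths m" shows "distinct p"
proof (unfold distinct_conv_nth, intro allI impI)
  fix i j assume "i < length p" "j < length p" "i \<noteq> j"
  then show "p ! i \<noteq> p ! j" using tp_fst[OF assms, of i] tp_fst[OF assms, of j] tp_len[OF assms] by auto
qed

lemma tp_card_set: assumes "p \<in> tree_paths m" shows "card (set p) = m"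
  by (simp add: distinct_card[OF tp_distinct[OF assms]] tp_len[OF assms])

lemma tp_set_fst: assumes "p \<in> tree_paths m" "v \<in> set p" shows "fst v < m"
proof -
  obtain k where "k < length p" "v = p ! k" using assms(2) by (auto simp: in_set_conv_nth)
  then show ?thesis using tp_fst[OF assms(1), of k] tp_len[OF assms(1)] by simp
qed

lemma tp0: "tree_paths 0 = {}"
  by (auto simp: tree_paths_def)

lemma tp1: "tree_paths 1 = {[(0,0)]}"
proof -
  have "p = [(0,0)]" if "p \<in> tree_paths 1" for p
    using that unfolding tree_paths_def by (cases p) auto
  moreover have "[(0,0)] \<in> tree_paths 1" by (simp add: tree_paths_def)
  ultimately show ?thesis by blast
qed

definition extp :: "nat \<Rightarrow> (nat \<times> nat) list \<times> nat \<Rightarrow> (nat \<times> nat) list" where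
  "extp m ps = fst ps @ [(m, 2 * snd (last (fst ps)) + snd ps)]"

lemma tp_I:
  assumes "length p = m" "p \<noteq> []" "p ! 0 = (0,0)"
    "\<And>k. k + 1 < m \<Longrightarrow> \<exists>s\<in>{0, 1}. p ! (k + 1) = (fst (p ! k) + 1, 2 * snd (p ! k) + s)"
  shows "p \<in> tree_paths m"
proof -
  have "hd p = (0,0)" using assms(2,3) by (simp add: hd_conv_nth)
  then show ?thesis unfolding tree_paths_def using assms(1,2,4) by blast
qed

lemma tp_Suc1:
  assumes m: "m \<ge> 1" and p: "p \<in> tree_paths m" and s: "s \<in> {0,1}"
  shows "extp m (p, s) \<in> tree_paths (Suc m)"
proof -
  define u where "u = (m, 2 * snd (last p) + s)"
  have e: "extp m (p, s) = p @ [u]" by (simp add: extp_def u_def)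
  have lp: "length p = m" using p tp_len by blast
  have ne: "p \<noteq> []" using lp m by auto
  have lastp: "last p = p ! (m - 1)" using lp ne by (simp add: last_conv_nth)
  have fl: "fst (last p) = m - 1" using lastp tp_fst[OF p] m by simp
  show ?thesis unfolding e
  proof (rule tp_I)
    show "length (p @ [u]) = Suc m" using lp by simp
    show "p @ [u] \<noteq> []" by simp
    show "(p @ [u]) ! 0 = (0, 0)" using ne tp_hd[OF p] by (simp add: nth_append)
    fix k assume k: "k + 1 < Suc m"
    show "\<exists>s\<in>{0, 1}. (p @ [u]) ! (k + 1) = (fst ((p @ [u]) ! k) + 1, 2 * snd ((p @ [u]) ! k) + s)"
    proof (cases "k + 1 < m")
      case True
      have a1: "(p @ [u]) ! (k + 1) = p ! (k + 1)" using True lp by (simp add: nth_append)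
      have a2: "(p @ [u]) ! k = p ! k" using True lp by (simp add: nth_append)
      show ?thesis unfolding a1 a2 using tp_step[OF p True] .
    next
      case False
      then have km: "k + 1 = m" using k by simp
      have a1: "(p @ [u]) ! (k + 1) = u" using km lp by (simp add: nth_append)
      have "k = m - 1" using km by simp
      then have a2: "(p @ [u]) ! k = last p" using km lp lastp by (simp add: nth_append)
      have "u = (fst (last p) + 1, 2 * snd (last p) + s)" using fl km u_def by simp
      then show ?thesis unfolding a1 a2 using s by blast
    qed
  qed
qed

lemma tp_Suc2:
  assumes m: "m \<ge> 1" and q: "q \<in> tree_paths (Suc m)"
  shows "q \<in> extp m ` (tree_paths m \<times> {0,1})"
proof -
  have lq: "length q = Suc m" using q tp_len by blast
  define p where "p = butlast q"
  have qne: "q \<noteq> []" using lq by auto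
  have qp: "q = p @ [last q]" using qne p_def by simp
  have lp: "length p = m" using lq p_def by simp
  have pn: "\<And>k. k < m \<Longrightarrow> p ! k = q ! k" using p_def lp by (simp add: nth_butlast)
  have pne: "p \<noteq> []" using lp m by auto
  have p: "p \<in> tree_paths m"
  proof (rule tp_I)
    show "length p = m" by fact
    show "p \<noteq> []" by fact
    show "p ! 0 = (0,0)" using pn[of 0] m tp_hd[OF q] by simp
    fix k assume k: "k + 1 < m"
    have a1: "p ! (k+1) = q ! (k+1)" using pn k by simp
    have a2: "p ! k = q ! k" using pn k by simp
    have "k + 1 < Suc m" using k by simp
    from tp_step[OF q this] show "\<exists>s\<in>{0, 1}. p ! (k + 1) = (fst (p ! k) + 1, 2 * snd (p ! k) + s)"
      unfolding a1 a2 .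
  qed
  have mm: "m - 1 + 1 < Suc m" using m by simp
  obtain s where s: "s \<in> {0,1}" "q ! (m - 1 + 1) = (fst (q ! (m-1)) + 1, 2 * snd (q ! (m-1)) + s)"
    using tp_step[OF q mm] by blast
  have m1: "m - 1 + 1 = m" using m by simp
  have lastq: "last q = q ! m" using lq qne by (simp add: last_conv_nth)
  have lastp: "last p = q ! (m-1)" using lp pne pn m by (simp add: last_conv_nth)
  have f: "fst (q ! (m-1)) = m - 1" using tp_fst[OF q] m by simp
  have "last q = (m, 2 * snd (last p) + s)" using s(2) unfolding m1 lastq lastp f m1 .
  then have "q = extp m (p, s)" unfolding extp_def using qp by simp
  then show ?thesis using p s by blast
qed

lemma tp_Suc: assumes "m \<ge> 1"
  shows "tree_paths (Suc m) = extp m ` (tree_paths m \<times> {0,1})"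
  using tp_Suc1[OF assms] tp_Suc2[OF assms] by blast

lemma bit_eq: fixes a b s t :: nat
  assumes "s \<in> {0,1}" "t \<in> {0,1}" "2*a+s = 2*b+t" shows "a = b \<and> s = t"
proof -
  have "s = (2*a+s) mod 2" using assms(1) by auto
  moreover have "t = (2*b+t) mod 2" using assms(2) by auto
  ultimately have "s = t" using assms(3) by simp
  then show ?thesis using assms(3) by simp
qed

lemma ext_eq: "extp m (p, s) = extp m (p', s') \<longleftrightarrow> p = p' \<and> s = s'"
  if "s \<in> {0,1}" "s' \<in> {0,1}"
proof
  assume "extp m (p, s) = extp m (p', s')"
  then have "p = p'" "2 * snd (last p) + s = 2 * snd (last p') + s'" unfolding extp_def by auto
  then show "p = p' \<and> s = s'" using bit_eq[OF that] by blast
qed simp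

lemma ext_inj: "inj_on (extp m) (tree_paths m \<times> {0,1})"
proof (rule inj_onI)
  fix x y assume "x \<in> tree_paths m \<times> {0,1}" "y \<in> tree_paths m \<times> {0,1}" "extp m x = extp m y"
  then show "x = y" using ext_eq[of "snd x" "snd y" m "fst x" "fst y"] by (simp add: prod_eq_iff mem_Times_iff)
qed

lemma tp_finite_card: "finite (tree_paths m) \<and> (m \<ge> 1 \<longrightarrow> card (tree_paths m) = 2 ^ (m - 1))"
proof (induction m)
  case 0 then show ?case by (simp add: tp0)
next
  case (Suc m)
  show ?case
  proof (cases "m = 0")
    case True
    then have "tree_paths (Suc m) = {[(0,0)]}" using tp1 by simp
    then show ?thesis using True by simp
  next
    case False
    then have m: "m \<ge> 1" by simp
    have fin: "finite (tree_paths m)" using Suc.IH by blast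
    have c: "card (tree_paths m) = 2 ^ (m - 1)" using Suc.IH m by blast
    have "card (tree_paths (Suc m)) = card (tree_paths m \<times> {0::nat,1})"
      unfolding tp_Suc[OF m] by (rule card_image[OF ext_inj])
    also have "\<dots> = card (tree_paths m) * 2" by (simp add: card_cartesian_product)
    also have "\<dots> = 2 ^ (m - 1) * 2" using c by simp
    also have "\<dots> = 2 ^ (Suc m - 1)" using m by (cases m) auto
    finally have "card (tree_paths (Suc m)) = 2 ^ (Suc m - 1)" .
    moreover have "finite (tree_paths (Suc m))" unfolding tp_Suc[OF m] using fin by simp
    ultimately show ?thesis by simp
  qed
qed

lemma tp_finite: "finite (tree_paths m)" using tp_finite_card by blast
lemma tp_card: "m \<ge> 1 \<Longrightarrow> card (tree_paths m) = 2 ^ (m - 1)" using tp_finite_card by blast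

lemma tp_last_inj: "p \<in> tree_paths m \<Longrightarrow> q \<in> tree_paths m \<Longrightarrow> last p = last q \<Longrightarrow> p = q"
proof (induction m arbitrary: p q)
  case 0 then show ?case by (simp add: tp0)
next
  case (Suc m)
  show ?case
  proof (cases "m = 0")
    case True
    then have "tree_paths (Suc m) = {[(0,0)]}" using tp1 by simp
    then show ?thesis using Suc.prems(1,2) by simp
  next
    case False
    then have m: "m \<ge> 1" by simp
    have "p \<in> extp m ` (tree_paths m \<times> {0,1})" using Suc.prems(1) unfolding tp_Suc[OF m] .
    then obtain x where x: "x \<in> tree_paths m \<times> {0,1}" "p = extp m x" by (rule imageE)
    obtain p0 s where ps: "x = (p0, s)" by (cases x)
    have p0: "p0 \<in> tree_paths m" "s \<in> {0,1}" "p = extp m (p0, s)" using x ps by auto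
    have "q \<in> extp m ` (tree_paths m \<times> {0,1})" using Suc.prems(2) unfolding tp_Suc[OF m] .
    then obtain y where y: "y \<in> tree_paths m \<times> {0,1}" "q = extp m y" by (rule imageE)
    obtain q0 t where qt: "y = (q0, t)" by (cases y)
    have q0: "q0 \<in> tree_paths m" "t \<in> {0,1}" "q = extp m (q0, t)" using y qt by auto
    have e: "2 * snd (last p0) + s = 2 * snd (last q0) + t"
      using Suc.prems(3) p0(3) q0(3) by (simp add: extp_def)
    have st: "snd (last p0) = snd (last q0) \<and> s = t" using bit_eq[OF p0(2) q0(2) e] .
    have "p0 \<noteq> []" "q0 \<noteq> []" using m tp_len[OF p0(1)] tp_len[OF q0(1)] by auto
    then have "last p0 = p0 ! (m-1)" "last q0 = q0 ! (m-1)"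
      using tp_len[OF p0(1)] tp_len[OF q0(1)] by (simp_all add: last_conv_nth)
    then have "fst (last p0) = fst (last q0)"
      using tp_fst[OF p0(1), of "m-1"] tp_fst[OF q0(1), of "m-1"] m by simp
    then have "last p0 = last q0" using st by (simp add: prod_eq_iff)
    then have "p0 = q0" using Suc.IH p0(1) q0(1) by blast
    then show ?thesis using p0(3) q0(3) st by simp
  qed
qed

lemma tp_last_fst: "p \<in> tree_paths m \<Longrightarrow> m \<ge> 1 \<Longrightarrow> fst (last p) = m - 1"
proof -
  assume p: "p \<in> tree_paths m" and m: "m \<ge> 1"
  have "p \<noteq> []" using m tp_len[OF p] by auto
  then have "last p = p ! (m-1)" using tp_len[OF p] by (simp add: last_conv_nth)
  then show ?thesis using tp_fst[OF p, of "m-1"] m by simp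
qed

lemma overlap_Suc:
  assumes m: "m \<ge> 1" and p: "p \<in> tree_paths m" "s \<in> {0,1}" and q: "q \<in> tree_paths m" "t \<in> {0,1}"
  shows "card (set (extp m (p, s)) \<inter> set (extp m (q, t))) =
    card (set p \<inter> set q) + (if p = q \<and> s = t then 1 else 0)"
proof -
  define u where "u = (m, 2 * snd (last p) + s)"
  define w where "w = (m, 2 * snd (last q) + t)"
  have su: "set (extp m (p, s)) = insert u (set p)" by (simp add: extp_def u_def)
  have sw: "set (extp m (q, t)) = insert w (set q)" by (simp add: extp_def w_def)
  have un: "u \<notin> set q" "u \<notin> set p" using tp_set_fst[OF q(1)] tp_set_fst[OF p(1)] u_def by fastforce+
  have wn: "w \<notin> set p" using tp_set_fst[OF p(1)] w_def by fastforce
  have uw: "u = w \<longleftrightarrow> p = q \<and> s = t"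
  proof
    assume "u = w"
    then have e: "2 * snd (last p) + s = 2 * snd (last q) + t" by (simp add: u_def w_def)
    have st: "snd (last p) = snd (last q) \<and> s = t" using bit_eq[OF p(2) q(2) e] .
    then have "last p = last q" using tp_last_fst[OF p(1) m] tp_last_fst[OF q(1) m] by (simp add: prod_eq_iff)
    then show "p = q \<and> s = t" using tp_last_inj[OF p(1) q(1)] st by blast
  qed (simp add: u_def w_def)
  have fin: "finite (set p \<inter> set q)" by simp
  show ?thesis
  proof (cases "u = w")
    case True
    then have "insert u (set p) \<inter> insert w (set q) = insert u (set p \<inter> set q)" by auto
    then show ?thesis unfolding su sw using True uw un fin by simp
  next
    case False
    then have "insert u (set p) \<inter> insert w (set q) = set p \<inter> set q" using un wn by auto
    then show ?thesis unfolding su sw using False uw by simp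
  qed
qed

definition FF :: "real \<Rightarrow> nat \<Rightarrow> real" where
  "FF a m = (\<Sum>p\<in>tree_paths m. \<Sum>q\<in>tree_paths m. a ^ card (set p \<inter> set q))"

lemma FF_Suc:
  assumes m: "m \<ge> 1"
  shows "FF a (Suc m) = 4 * FF a m + 2 ^ (m - 1) * a ^ m * (2 * a - 2)"
proof -
  let ?P = "tree_paths m"
  let ?c = "\<lambda>p q. card (set p \<inter> set q)"
  have "FF a (Suc m) = (\<Sum>x\<in>?P \<times> {0::nat,1}. \<Sum>y\<in>?P \<times> {0::nat,1}. a ^ card (set (extp m x) \<inter> set (extp m y)))"
    unfolding FF_def tp_Suc[OF m] sum.reindex[OF ext_inj] by simp
  also have "\<dots> = (\<Sum>x\<in>?P \<times> {0::nat,1}. \<Sum>y\<in>?P \<times> {0::nat,1}.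
      a ^ ?c (fst x) (fst y) * (if fst x = fst y \<and> snd x = snd y then a else 1))"
  proof (rule sum.cong[OF refl], rule sum.cong[OF refl])
    fix x y assume x: "x \<in> ?P \<times> {0::nat,1}" and y: "y \<in> ?P \<times> {0::nat,1}"
    obtain p s where xs: "x = (p, s)" by (cases x)
    obtain q t where yt: "y = (q, t)" by (cases y)
    show "a ^ card (set (extp m x) \<inter> set (extp m y)) =
      a ^ ?c (fst x) (fst y) * (if fst x = fst y \<and> snd x = snd y then a else 1)"
      using overlap_Suc[OF m, of p s q t] x y unfolding xs yt by auto
  qed
  also have "\<dots> = (\<Sum>p\<in>?P. \<Sum>q\<in>?P. a ^ ?c p q * (if p = q then 2 * a + 2 else 4))"
    unfolding sum.cartesian_product'
  proof (rule sum.cong[OF refl])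
    fix p assume "p \<in> ?P"
    have "(\<Sum>s\<in>{0::nat,1}. \<Sum>q\<in>?P. \<Sum>t\<in>{0::nat,1}. a ^ ?c (fst (p, s)) (fst (q, t)) *
        (if fst (p, s) = fst (q, t) \<and> snd (p, s) = snd (q, t) then a else 1))
      = (\<Sum>q\<in>?P. \<Sum>s\<in>{0::nat,1}. \<Sum>t\<in>{0::nat,1}. a ^ ?c p q *
        (if p = q \<and> s = t then a else 1))"
      by (subst sum.swap) simp
    also have "\<dots> = (\<Sum>q\<in>?P. a ^ ?c p q * (if p = q then 2 * a + 2 else 4))"
      by (intro sum.cong refl) (simp add: algebra_simps)
    finally show "(\<Sum>s\<in>{0::nat,1}. \<Sum>q\<in>?P. \<Sum>t\<in>{0::nat,1}. a ^ ?c (fst (p, s)) (fst (q, t)) *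
        (if fst (p, s) = fst (q, t) \<and> snd (p, s) = snd (q, t) then a else 1))
      = (\<Sum>q\<in>?P. a ^ ?c p q * (if p = q then 2 * a + 2 else 4))" .
  qed
  also have "\<dots> = (\<Sum>p\<in>?P. \<Sum>q\<in>?P. (4 * a ^ ?c p q + (if p = q then a ^ ?c p q * (2 * a - 2) else 0)))"
    by (intro sum.cong refl) (simp add: algebra_simps)
  also have "\<dots> = 4 * FF a m + (\<Sum>p\<in>?P. a ^ ?c p p * (2 * a - 2))"
    by (simp add: sum.distrib FF_def sum_distrib_left tp_finite)
  also have "(\<Sum>p\<in>?P. a ^ ?c p p * (2 * a - 2)) = (\<Sum>p\<in>?P. a ^ m * (2 * a - 2))"
    by (intro sum.cong refl) (simp add: tp_card_set)
  also have "\<dots> = 2 ^ (m - 1) * a ^ m * (2 * a - 2)" by (simp add: tp_card[OF m])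
  finally show ?thesis .
qed


lemma FF_closed:
  "FF a (Suc n) = 4 ^ n * (1 + (a - 1) * (\<Sum>k<Suc n. (a/2)^k))"
proof (induction n)
  case 0
  have "FF a 1 = a" unfolding FF_def tp1 by simp
  then show ?case by simp
next
  case (Suc n)
  have "FF a (Suc (Suc n)) = 4 * FF a (Suc n) + 2 ^ n * a ^ Suc n * (2 * a - 2)"
    using FF_Suc[of "Suc n" a] by simp
  also have "\<dots> = 4 * 4 ^ n * (1 + (a - 1) * (\<Sum>k<Suc n. (a/2)^k)) + 2 ^ n * a ^ Suc n * (2 * a - 2)"
    using Suc by simp
  also have "\<dots> = 4 ^ Suc n * (1 + (a - 1) * (\<Sum>k<Suc (Suc n). (a/2)^k))"
  proof -
    have h1: "(4::real) ^ Suc n = 2 ^ Suc n * 2 ^ Suc n"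
      by (metis power_mult_distrib mult_2 numeral_Bit0 numeral_One one_add_one)
    have h2: "(a/2) ^ Suc n = a ^ Suc n / 2 ^ Suc n" by (simp add: power_divide)
    have "4 ^ Suc n * ((a - 1) * (a/2) ^ Suc n) = 2 ^ n * a ^ Suc n * (2 * a - 2)"
      unfolding h1 h2 by (simp add: field_simps)
    then show ?thesis by (simp add: algebra_simps)
  qed
  finally show ?case .
qed

lemma tp_snd: "p \<in> tree_paths m \<Longrightarrow> k < m \<Longrightarrow> snd (p ! k) < 2 ^ k"
proof (induction k)
  case 0
  then show ?case using tp_hd by simp
next
  case (Suc k)
  then obtain s where s: "s \<in> {0,1}" "p ! (k + 1) = (fst (p ! k) + 1, 2 * snd (p ! k) + s)"
    using tp_step[of p m k] by auto
  have "snd (p ! k) < 2 ^ k" using Suc by simp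
  then have "2 * snd (p ! k) + s < 2 ^ Suc k" using s(1) by auto
  then show ?case using s by simp
qed

lemma tp_subset: assumes "p \<in> tree_paths m" shows "set p \<subseteq> tree_V_all"
proof
  fix v assume "v \<in> set p"
  then obtain k where k: "k < length p" "v = p ! k" by (auto simp: in_set_conv_nth)
  have "fst v = k" "snd v < 2 ^ k" using tp_fst[OF assms, of k] tp_snd[OF assms, of k] k tp_len[OF assms] by auto
  then show "v \<in> tree_V_all" unfolding tree_V_all_def by (cases v) auto
qed

lemma sum_split:
  fixes f :: "'b \<Rightarrow> real"
  assumes "finite A" "finite B"
  shows "(\<Sum>v\<in>A \<union> B. (of_bool (v \<in> A) + of_bool (v \<in> B)) * f v) = sum f A + sum f B"
proof -
  have g: "(\<Sum>v\<in>A \<union> B. of_bool (v \<in> C) * f v) = sum f C" if "C \<subseteq> A \<union> B" for C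
  proof -
    have "(\<Sum>v\<in>A \<union> B. of_bool (v \<in> C) * f v) = (\<Sum>v\<in>A \<union> B. if v \<in> C then f v else 0)"
      by (intro sum.cong refl) auto
    also have "\<dots> = sum f ((A \<union> B) \<inter> C)" using assms by (simp add: sum.inter_restrict)
    also have "(A \<union> B) \<inter> C = C" using that by blast
    finally show ?thesis .
  qed
  show ?thesis using g[of A] g[of B] by (simp add: algebra_simps sum.distrib)
qed

lemma sum_sq_split:
  assumes "finite A" "finite B"
  shows "(\<Sum>v\<in>A \<union> B. (of_bool (v \<in> A) + of_bool (v \<in> B))^2) = real (card A + card B + 2 * card (A \<inter> B))"
proof -
  have "(\<Sum>v\<in>A \<union> B. (of_bool (v \<in> A) + of_bool (v \<in> B))^2) =
    (\<Sum>v\<in>A \<union> B. (of_bool (v \<in> A) + of_bool (v \<in> B)) * (1::real)) + 2 * (\<Sum>v\<in>A \<union> B. of_bool (v \<in> A \<inter> B))"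
  proof -
    have "(\<Sum>v\<in>A \<union> B. (of_bool (v \<in> A) + of_bool (v \<in> B))^2) =
      (\<Sum>v\<in>A \<union> B. (of_bool (v \<in> A) + of_bool (v \<in> B)) * (1::real) + 2 * of_bool (v \<in> A \<inter> B))"
      by (intro sum.cong refl) auto
    then show ?thesis by (simp add: sum.distrib sum_distrib_left)
  qed
  also have "\<dots> = real (card A + card B + 2 * card (A \<inter> B))"
  proof -
    have "(A \<union> B) \<inter> {x. x \<in> A \<inter> B} = A \<inter> B" by blast
    then show ?thesis using sum_split[OF assms, of "\<lambda>_. 1"] assms by simp
  qed
  finally show ?thesis .
qed

lemma var_formula:
  fixes M :: "'a measure" and X :: "nat \<times> nat \<Rightarrow> 'a \<Rightarrow> real"
  assumes P: "prob_space M"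
    and ind: "prob_space.indep_vars M (\<lambda>_. borel) X tree_V_all"
    and d: "\<forall>v\<in>tree_V_all. distributed M lborel (X v) std_normal_density"
    and m: "m \<ge> 1"
  shows "prob_space.variance M (LR \<mu> m X) = (exp (\<mu>\<^sup>2) - 1) * (\<Sum>k<m. (exp (\<mu>\<^sup>2) / 2) ^ k)"
proof -
  interpret prob_space M by (fact P)
  let ?P = "tree_paths m"
  define Y where "Y p \<omega> = exp (\<mu> * path_sum X p \<omega> - real m * \<mu>\<^sup>2 / 2)" for p \<omega>
  define c :: real where "c = 1 / 2 ^ (m - 1)"
  have L: "LR \<mu> m X = (\<lambda>\<omega>. c * (\<Sum>p\<in>?P. Y p \<omega>))"
    unfolding LR_def Y_def c_def by (rule ext) simp
  have fin: "finite ?P" by (rule tp_finite)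
  have Y1: "Y p = (\<lambda>\<omega>. exp (- real m * \<mu>\<^sup>2 / 2) * exp (\<Sum>v\<in>set p. \<mu> * X v \<omega>))" for p
    unfolding Y_def path_sum_def by (rule ext) (simp add: sum_distrib_left flip: exp_add)
  have Y2: "(\<lambda>\<omega>. Y p \<omega> * Y q \<omega>) = (\<lambda>\<omega>. exp (- real m * \<mu>\<^sup>2) *
       exp (\<Sum>v\<in>set p \<union> set q. (\<mu> * (of_bool (v \<in> set p) + of_bool (v \<in> set q))) * X v \<omega>))" for p q
  proof (rule ext)
    fix \<omega>
    have "(\<Sum>v\<in>set p \<union> set q. (\<mu> * (of_bool (v \<in> set p) + of_bool (v \<in> set q))) * X v \<omega>)
      = (\<Sum>v\<in>set p \<union> set q. (of_bool (v \<in> set p) + of_bool (v \<in> set q)) * (\<mu> * X v \<omega>))"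
      by (intro sum.cong refl) (simp add: algebra_simps)
    also have "\<dots> = (\<Sum>v\<in>set p. \<mu> * X v \<omega>) + (\<Sum>v\<in>set q. \<mu> * X v \<omega>)"
      by (rule sum_split) auto
    finally show "Y p \<omega> * Y q \<omega> = exp (- real m * \<mu>\<^sup>2) *
       exp (\<Sum>v\<in>set p \<union> set q. (\<mu> * (of_bool (v \<in> set p) + of_bool (v \<in> set q))) * X v \<omega>)"
      unfolding Y1 by (simp add: mult_exp_exp field_simps)
  qed
  have intY: "integrable M (Y p)" and EY: "expectation (Y p) = 1" if p: "p \<in> ?P" for p
  proof -
    have sub: "set p \<subseteq> tree_V_all" by (rule tp_subset[OF p])
    note ms = mgf_sum[OF ind d finite_set sub, of "\<lambda>_. \<mu>"]
    show "integrable M (Y p)" unfolding Y1 using ms(1) by simp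
    have "expectation (Y p) = exp (- real m * \<mu>\<^sup>2 / 2) * exp (\<Sum>v\<in>set p. \<mu>\<^sup>2 / 2)"
      unfolding Y1 using ms(2) by simp
    also have "\<dots> = 1" using tp_card_set[OF p] by (simp flip: exp_add)
    finally show "expectation (Y p) = 1" .
  qed
  have intYY: "integrable M (\<lambda>\<omega>. Y p \<omega> * Y q \<omega>)"
    and EYY: "expectation (\<lambda>\<omega>. Y p \<omega> * Y q \<omega>) = exp (\<mu>\<^sup>2) ^ card (set p \<inter> set q)"
    if p: "p \<in> ?P" and q: "q \<in> ?P" for p q
  proof -
    have sub: "set p \<union> set q \<subseteq> tree_V_all" using tp_subset[OF p] tp_subset[OF q] by blast
    note ms = mgf_sum[OF ind d _ sub, of "\<lambda>v. \<mu> * (of_bool (v \<in> set p) + of_bool (v \<in> set q))"]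
    show "integrable M (\<lambda>\<omega>. Y p \<omega> * Y q \<omega>)" unfolding Y2 using ms(1) by simp
    have "(\<Sum>v\<in>set p \<union> set q. (\<mu> * (of_bool (v \<in> set p) + of_bool (v \<in> set q)))^2 / 2)
       = \<mu>\<^sup>2 / 2 * (\<Sum>v\<in>set p \<union> set q. (of_bool (v \<in> set p) + of_bool (v \<in> set q))^2)"
      by (simp add: sum_distrib_left power_mult_distrib)
    also have "\<dots> = \<mu>\<^sup>2 / 2 * real (m + m + 2 * card (set p \<inter> set q))"
      using sum_sq_split[of "set p" "set q"] tp_card_set[OF p] tp_card_set[OF q] by simp
    finally have e: "(\<Sum>v\<in>set p \<union> set q. (\<mu> * (of_bool (v \<in> set p) + of_bool (v \<in> set q)))^2 / 2)
       = \<mu>\<^sup>2 / 2 * real (m + m + 2 * card (set p \<inter> set q))" .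
    have "expectation (\<lambda>\<omega>. Y p \<omega> * Y q \<omega>) = exp (- real m * \<mu>\<^sup>2) * exp (\<mu>\<^sup>2 / 2 * real (m + m + 2 * card (set p \<inter> set q)))"
      unfolding Y2 using ms(2) e by simp
    also have "\<dots> = exp (real (card (set p \<inter> set q)) * \<mu>\<^sup>2)"
      by (simp add: field_simps flip: exp_add)
    also have "\<dots> = exp (\<mu>\<^sup>2) ^ card (set p \<inter> set q)" by (rule exp_of_nat_mult)
    finally show "expectation (\<lambda>\<omega>. Y p \<omega> * Y q \<omega>) = exp (\<mu>\<^sup>2) ^ card (set p \<inter> set q)" .
  qed
  have L2: "(\<lambda>\<omega>. (LR \<mu> m X \<omega>)\<^sup>2) = (\<lambda>\<omega>. c^2 * (\<Sum>p\<in>?P. \<Sum>q\<in>?P. Y p \<omega> * Y q \<omega>))"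
    unfolding L by (rule ext) (simp add: power2_eq_square sum_product algebra_simps)
  have iL: "integrable M (LR \<mu> m X)" unfolding L using intY by auto
  have iL2: "integrable M (\<lambda>\<omega>. (LR \<mu> m X \<omega>)\<^sup>2)" unfolding L2 using intYY by auto
  have EL: "expectation (LR \<mu> m X) = 1"
  proof -
    have "expectation (LR \<mu> m X) = c * (\<Sum>p\<in>?P. expectation (Y p))"
      unfolding L using intY by (simp add: integral_sum)
    also have "\<dots> = c * card ?P" using EY by simp
    also have "\<dots> = 1" unfolding c_def tp_card[OF m] by simp
    finally show ?thesis .
  qed
  obtain n where n: "m = Suc n" using m by (cases m) auto
  have EL2: "expectation (\<lambda>\<omega>. (LR \<mu> m X \<omega>)\<^sup>2) = 1 + (exp (\<mu>\<^sup>2) - 1) * (\<Sum>k<m. (exp (\<mu>\<^sup>2) / 2) ^ k)"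
  proof -
    have "expectation (\<lambda>\<omega>. (LR \<mu> m X \<omega>)\<^sup>2) = c^2 * (\<Sum>p\<in>?P. \<Sum>q\<in>?P. expectation (\<lambda>\<omega>. Y p \<omega> * Y q \<omega>))"
      unfolding L2 using intYY by (simp add: integral_sum)
    also have "\<dots> = c^2 * FF (exp (\<mu>\<^sup>2)) m"
      unfolding FF_def using EYY by (simp cong: sum.cong)
    also have "\<dots> = c^2 * (4 ^ n * (1 + (exp (\<mu>\<^sup>2) - 1) * (\<Sum>k<m. (exp (\<mu>\<^sup>2) / 2) ^ k)))"
      unfolding n FF_closed ..
    also have "c^2 * 4 ^ n = 1"
    proof -
      have "(4::real) ^ n = 2 ^ n * 2 ^ n"
        by (metis power_mult_distrib mult_2 numeral_Bit0 numeral_One one_add_one)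
      then show ?thesis unfolding c_def n by (simp add: power2_eq_square)
    qed
    then have "c^2 * (4 ^ n * (1 + (exp (\<mu>\<^sup>2) - 1) * (\<Sum>k<m. (exp (\<mu>\<^sup>2) / 2) ^ k)))
        = 1 + (exp (\<mu>\<^sup>2) - 1) * (\<Sum>k<m. (exp (\<mu>\<^sup>2) / 2) ^ k)"
      by (metis mult.assoc mult_1)
    finally show ?thesis .
  qed
  show ?thesis using variance_eq[OF iL iL2] EL EL2 by simp
qed

theorem mainTheorem12:
  fixes M :: "'a measure" and X :: "nat \<times> nat \<Rightarrow> 'a \<Rightarrow> real"
  assumes "prob_space M"
    and "prob_space.indep_vars M (\<lambda>_. borel) X tree_V_all"
    and "\<forall>v\<in>tree_V_all. distributed M lborel (X v) std_normal_density"
  shows "(\<forall>(\<mu>::real) (m::nat). m \<ge> 1 \<longrightarrow> exp (\<mu>\<^sup>2) / 2 \<noteq> 1 \<longrightarrow>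
            prob_space.variance M (LR \<mu> m X) =
              (2 * (exp (\<mu>\<^sup>2) / 2) - 1) * (1 - (exp (\<mu>\<^sup>2) / 2) ^ m) / (1 - exp (\<mu>\<^sup>2) / 2))
       \<and> (\<forall>\<mu> :: nat \<Rightarrow> real. \<mu> \<longlonglongrightarrow> 0 \<longrightarrow>
            (\<lambda>m. prob_space.variance M (LR (\<mu> m) m X)) \<longlonglongrightarrow> 0)"
proof (intro conjI allI impI)
  fix \<mu> :: real and m :: nat
  assume m: "m \<ge> 1" and t: "exp (\<mu>\<^sup>2) / 2 \<noteq> 1"
  have "prob_space.variance M (LR \<mu> m X) = (exp (\<mu>\<^sup>2) - 1) * (\<Sum>k<m. (exp (\<mu>\<^sup>2) / 2) ^ k)"
    by (rule var_formula[OF assms m])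
  also have "\<dots> = (2 * (exp (\<mu>\<^sup>2) / 2) - 1) * (1 - (exp (\<mu>\<^sup>2) / 2) ^ m) / (1 - exp (\<mu>\<^sup>2) / 2)"
    using t by (simp add: sum_gp_strict)
  finally show "prob_space.variance M (LR \<mu> m X) =
      (2 * (exp (\<mu>\<^sup>2) / 2) - 1) * (1 - (exp (\<mu>\<^sup>2) / 2) ^ m) / (1 - exp (\<mu>\<^sup>2) / 2)" .
next
  fix \<mu> :: "nat \<Rightarrow> real"
  assume lim: "\<mu> \<longlonglongrightarrow> 0"
  define a where "a m = exp ((\<mu> m)\<^sup>2)" for m
  have alim: "a \<longlonglongrightarrow> 1" unfolding a_def using lim
    by (metis (no_types) exp_zero power_zero_numeral tendsto_exp tendsto_power zero_neq_numeral)
  have ev: "eventually (\<lambda>m. a m < 3/2) sequentially"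
    using order_tendstoD(2)[OF alim, of "3/2"] by simp
  have ev1: "eventually (\<lambda>m. m \<ge> 1) sequentially" by (rule eventually_ge_at_top)
  have g: "((\<lambda>m. 4 * \<bar>a m - 1\<bar>) \<longlonglongrightarrow> 0)"
    using tendsto_mult_right_zero[OF tendsto_rabs_zero[OF LIM_zero[OF alim]], of 4] by simp
  show "(\<lambda>m. prob_space.variance M (LR (\<mu> m) m X)) \<longlonglongrightarrow> 0"
  proof (rule Lim_null_comparison[OF _ g])
    show "\<forall>\<^sub>F m in sequentially. norm (prob_space.variance M (LR (\<mu> m) m X)) \<le> 4 * \<bar>a m - 1\<bar>"
      using ev ev1
    proof eventually_elim
      case (elim m)
      have v: "prob_space.variance M (LR (\<mu> m) m X) = (a m - 1) * (\<Sum>k<m. (a m / 2) ^ k)"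
        unfolding a_def by (rule var_formula[OF assms elim(2)])
      have a0: "a m > 0" unfolding a_def by simp
      have "(\<Sum>k<m. (a m / 2) ^ k) \<le> (\<Sum>k<m. (3/4::real) ^ k)"
        using elim(1) a0 by (intro sum_mono power_mono) auto
      also have "\<dots> = (1 - (3/4) ^ m) / (1 - 3/4)" by (simp add: sum_gp_strict)
      also have "\<dots> \<le> 4" by simp
      finally have s4: "(\<Sum>k<m. (a m / 2) ^ k) \<le> 4" .
      have s0: "(\<Sum>k<m. (a m / 2) ^ k) \<ge> 0" using a0 by (intro sum_nonneg) simp
      have "norm (prob_space.variance M (LR (\<mu> m) m X)) = \<bar>a m - 1\<bar> * (\<Sum>k<m. (a m / 2) ^ k)"
        unfolding v using s0 by (simp add: abs_mult)
      also have "\<dots> \<le> \<bar>a m - 1\<bar> * 4" using s4 by (intro mult_left_mono) auto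
      finally show ?case by simp
    qed
  qed
qed

end
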